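(* If the random vector $(X_1,\dots,X_n)$ is exchangeable, then $(-X_1,X_2,\dots,X_n)$ is SIAMX* and SIAMN*.
   Context: Exchangeable means the distribution is invariant under all permutations of coordinates. For random variables $U,V$, $U\le_{\mathrm{st}}V$ means $F_U(x)\ge F_V(x)$ for all $x$ ($F$ the cdf). A random vector $(Y_1,\dots,Y_n)$ is SIAMX* if $|Y_1|\overset{d}{=}|\max(Y_1,Y_2)|$ and $|\max(Y_1,\dots,Y_{l-1})|\le_{\mathrm{st}}|\max(Y_1,\dots,Y_l)|$ for $l=3,\dots,n$; SIAMN* is the same with $\max$ replaced by $\min$. *)

theory Defs
  imports "HOL-Probability.Probability"
begin

text \<open>Random vectors are indexed by {1..n}: component i is X i :: 'a => real on the
probability space M. The joint law is the pushforward to the product space.\<close>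

definition joint_law :: "'a measure \<Rightarrow> nat \<Rightarrow> (nat \<Rightarrow> 'a \<Rightarrow> real) \<Rightarrow> (nat \<Rightarrow> real) measure" where
  "joint_law M n X = distr M (PiM {1..n} (\<lambda>_. borel)) (\<lambda>\<omega>. \<lambda>i\<in>{1..n}. X i \<omega>)"

definition exchangeable :: "'a measure \<Rightarrow> nat \<Rightarrow> (nat \<Rightarrow> 'a \<Rightarrow> real) \<Rightarrow> bool" where
  "exchangeable M n X \<longleftrightarrow>
     (\<forall>\<pi>. \<pi> permutes {1..n} \<longrightarrow> joint_law M n (\<lambda>i. X (\<pi> i)) = joint_law M n X)"

definition eq_dist :: "'a measure \<Rightarrow> ('a \<Rightarrow> real) \<Rightarrow> ('a \<Rightarrow> real) \<Rightarrow> bool" where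
  "eq_dist M U V \<longleftrightarrow> distr M borel U = distr M borel V"

definition st_le :: "'a measure \<Rightarrow> ('a \<Rightarrow> real) \<Rightarrow> ('a \<Rightarrow> real) \<Rightarrow> bool" where
  "st_le M U V \<longleftrightarrow>
     (\<forall>x. measure M {\<omega>\<in>space M. V \<omega> \<le> x} \<le> measure M {\<omega>\<in>space M. U \<omega> \<le> x})"

definition max_upto :: "(nat \<Rightarrow> 'a \<Rightarrow> real) \<Rightarrow> nat \<Rightarrow> 'a \<Rightarrow> real" where
  "max_upto Y l \<omega> = Max ((\<lambda>i. Y i \<omega>) ` {1..l})"

definition min_upto :: "(nat \<Rightarrow> 'a \<Rightarrow> real) \<Rightarrow> nat \<Rightarrow> 'a \<Rightarrow> real" where
  "min_upto Y l \<omega> = Min ((\<lambda>i. Y i \<omega>) ` {1..l})"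

definition SIAMX :: "'a measure \<Rightarrow> nat \<Rightarrow> (nat \<Rightarrow> 'a \<Rightarrow> real) \<Rightarrow> bool" where
  "SIAMX M n Y \<longleftrightarrow>
     eq_dist M (\<lambda>\<omega>. \<bar>Y 1 \<omega>\<bar>) (\<lambda>\<omega>. \<bar>max (Y 1 \<omega>) (Y 2 \<omega>)\<bar>) \<and>
     (\<forall>l\<in>{3..n}. st_le M (\<lambda>\<omega>. \<bar>max_upto Y (l - 1) \<omega>\<bar>) (\<lambda>\<omega>. \<bar>max_upto Y l \<omega>\<bar>))"

definition SIAMN :: "'a measure \<Rightarrow> nat \<Rightarrow> (nat \<Rightarrow> 'a \<Rightarrow> real) \<Rightarrow> bool" where
  "SIAMN M n Y \<longleftrightarrow>
     eq_dist M (\<lambda>\<omega>. \<bar>Y 1 \<omega>\<bar>) (\<lambda>\<omega>. \<bar>min (Y 1 \<omega>) (Y 2 \<omega>)\<bar>) \<and>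
     (\<forall>l\<in>{3..n}. st_le M (\<lambda>\<omega>. \<bar>min_upto Y (l - 1) \<omega>\<bar>) (\<lambda>\<omega>. \<bar>min_upto Y l \<omega>\<bar>))"

end

theory Submission
  imports Defs
begin

definition Yf :: "(nat \<Rightarrow> real) \<Rightarrow> nat \<Rightarrow> real" where
  "Yf f i = (if i = 1 then - f 1 else f i)"

lemma comp_meas[measurable]:
  "(\<lambda>f. f j) \<in> borel_measurable (PiM {1..n} (\<lambda>_. borel::real measure))"
proof (cases "j \<in> {1..n}")
  case True then show ?thesis by (rule measurable_component_singleton)
next
  case False
  have e: "f j = undefined" if "f \<in> space (PiM {1..n} (\<lambda>_. borel::real measure))" for f
    using that False unfolding space_PiM by (rule PiE_arb)
  show ?thesis
    by (rule measurable_cong[THEN iffD2, OF e]) simp_all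
qed

lemma Yf_meas[measurable]:
  "(\<lambda>f. Yf f j) \<in> borel_measurable (PiM {1..n} (\<lambda>_. borel::real measure))"
proof (cases "j = 1")
  case True
  have "(\<lambda>f. Yf f j) = (\<lambda>f. - f 1)" using True by (auto simp: Yf_def)
  then show ?thesis by (simp only:) (intro borel_measurable_uminus comp_meas)
next
  case False
  have "(\<lambda>f. Yf f j) = (\<lambda>f. f j)" using False by (auto simp: Yf_def)
  then show ?thesis by (simp only:) (intro comp_meas)
qed

lemma logic_max: fixes a :: "nat \<Rightarrow> real" assumes "x \<ge> 0" "I \<noteq> {}" shows "(((\<forall>i\<in>I. a i \<le> x) \<and> b \<le> x \<and> ((\<exists>i\<in>I. -x \<le> a i) \<or> -x \<le> b)) \<or> ((\<forall>i\<in>I. a i \<le> x) \<and> b > x)) \<longleftrightarrow> (((\<forall>i\<in>I. a i \<le> x) \<and> (\<exists>i\<in>I. -x \<le> a i)) \<or> ((\<forall>i\<in>I. a i < -x) \<and> -x \<le> b))"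
  using assms by (smt (verit) equals0I)
lemma logic_min: fixes a :: "nat \<Rightarrow> real" assumes "x \<ge> 0" "I \<noteq> {}" shows "(((\<forall>i\<in>I. -x \<le> a i) \<and> -x \<le> b \<and> ((\<exists>i\<in>I. a i \<le> x) \<or> b \<le> x)) \<or> ((\<forall>i\<in>I. -x \<le> a i) \<and> b < -x)) \<longleftrightarrow> (((\<forall>i\<in>I. -x \<le> a i) \<and> (\<exists>i\<in>I. a i \<le> x)) \<or> ((\<forall>i\<in>I. a i > x) \<and> b \<le> x))"
  using assms by (smt (verit) equals0I)


lemma logic_max2: fixes a :: "nat \<Rightarrow> real" assumes "x \<ge> 0" "I \<noteq> {}"
  shows "(((\<forall>i\<in>insert l I. a i \<le> x) \<and> (\<exists>i\<in>insert l I. -x \<le> a i)) \<or> ((\<forall>i\<in>I. a i \<le> x) \<and> x < a l))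
     \<longleftrightarrow> (((\<forall>i\<in>I. a i \<le> x) \<and> (\<exists>i\<in>I. -x \<le> a i)) \<or> ((\<forall>i\<in>I. a i < -x) \<and> -x \<le> a l))"
  using assms by (smt (verit) equals0I insert_iff)

lemma logic_min2: fixes a :: "nat \<Rightarrow> real" assumes "x \<ge> 0" "I \<noteq> {}"
  shows "(((\<forall>i\<in>insert l I. -x \<le> a i) \<and> (\<exists>i\<in>insert l I. a i \<le> x)) \<or> ((\<forall>i\<in>I. -x \<le> a i) \<and> a l < -x))
     \<longleftrightarrow> (((\<forall>i\<in>I. -x \<le> a i) \<and> (\<exists>i\<in>I. a i \<le> x)) \<or> ((\<forall>i\<in>I. x < a i) \<and> a l \<le> x))"
  using assms by (smt (verit) equals0I insert_iff)

lemma abs_le_iff': "(\<bar>a::real\<bar> \<le> r) = (a \<le> r \<and> -r \<le> a)" by auto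

lemma ball_img: "(\<forall>a\<in>f ` S. P a) = (\<forall>i\<in>S. P (f i))" by auto
lemma bex_img: "(\<exists>a\<in>f ` S. P a) = (\<exists>i\<in>S. P (f i))" by auto

locale setting =
  fixes M :: "'a measure" and X :: "nat \<Rightarrow> 'a \<Rightarrow> real" and n :: nat
  assumes P: "prob_space M"
    and Xm: "\<And>i. i \<in> {1..n} \<Longrightarrow> X i \<in> borel_measurable M"
    and ex: "exchangeable M n X"
begin

abbreviation N where "N \<equiv> PiM {1..n} (\<lambda>_. borel::real measure)"
definition g where "g \<omega> = (\<lambda>i\<in>{1..n}. X i \<omega>)"
definition Ev where "Ev Q = {\<omega>\<in>space M. Q (g \<omega>)}"

lemma g_meas: "g \<in> M \<rightarrow>\<^sub>M N"
  unfolding g_def by (rule measurable_restrict) (rule Xm)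

lemma Ev_sets: assumes "Q \<in> measurable N (count_space UNIV)" shows "Ev Q \<in> sets M"
proof -
  have "(\<lambda>\<omega>. Q (g \<omega>)) \<in> measurable M (count_space UNIV)" by (rule measurable_compose[OF g_meas assms])
  then show ?thesis unfolding Ev_def by (rule pred_def[THEN iffD1])
qed

lemma swap:
  assumes "\<pi> permutes {1..n}" "Q \<in> measurable N (count_space UNIV)"
  shows "measure M {\<omega>\<in>space M. Q (\<lambda>i\<in>{1..n}. X (\<pi> i) \<omega>)} = measure M (Ev Q)"
proof -
  let ?h = "\<lambda>\<omega>. \<lambda>i\<in>{1..n}. X (\<pi> i) \<omega>"
  have m1: "?h \<in> M \<rightarrow>\<^sub>M N"
    by (rule measurable_restrict, rule Xm, subst permutes_in_image[OF assms(1)], assumption)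
  have S: "{f\<in>space N. Q f} \<in> sets N" using assms(2) by (rule pred_def[THEN iffD1])
  have eq: "joint_law M n (\<lambda>i. X (\<pi> i)) = joint_law M n X"
    by (rule ex[unfolded exchangeable_def, rule_format, OF assms(1)])
  have s1: "?h -` {f\<in>space N. Q f} \<inter> space M = {\<omega>\<in>space M. Q (?h \<omega>)}"
    using measurable_space[OF m1] by auto
  have s2: "g -` {f\<in>space N. Q f} \<inter> space M = Ev Q"
    using measurable_space[OF g_meas] unfolding Ev_def by auto
  have "measure (joint_law M n (\<lambda>i. X (\<pi> i))) {f\<in>space N. Q f}
     = measure M {\<omega>\<in>space M. Q (?h \<omega>)}"
    unfolding joint_law_def measure_distr[OF m1 S] s1 ..
  moreover have "measure (joint_law M n X) {f\<in>space N. Q f} = measure M (Ev Q)"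
    unfolding joint_law_def g_def[symmetric] measure_distr[OF g_meas S] s2 ..
  ultimately show ?thesis using eq by simp
qed

lemma key:
  assumes "A \<in> measurable N (count_space UNIV)" "B \<in> measurable N (count_space UNIV)" "C \<in> measurable N (count_space UNIV)" "D \<in> measurable N (count_space UNIV)"
    and "\<And>f. (A f \<or> C f) \<longleftrightarrow> (B f \<or> D f)"
    and "\<And>f. \<not> (A f \<and> C f)" "\<And>f. \<not> (B f \<and> D f)"
  shows "measure M (Ev A) + measure M (Ev C) = measure M (Ev B) + measure M (Ev D)"
proof -
  interpret prob_space M by (rule P)
  have u1: "Ev A \<union> Ev C = {\<omega>\<in>space M. A (g \<omega>) \<or> C (g \<omega>)}" unfolding Ev_def by blast
  have u2: "Ev B \<union> Ev D = {\<omega>\<in>space M. B (g \<omega>) \<or> D (g \<omega>)}" unfolding Ev_def by blast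
  have d1: "Ev A \<inter> Ev C = {}" unfolding Ev_def using assms(6) by blast
  have d2: "Ev B \<inter> Ev D = {}" unfolding Ev_def using assms(7) by blast
  have "measure M (Ev A \<union> Ev C) = measure M (Ev A) + measure M (Ev C)"
    by (rule finite_measure_Union[OF Ev_sets[OF assms(1)] Ev_sets[OF assms(3)] d1])
  moreover have "measure M (Ev B \<union> Ev D) = measure M (Ev B) + measure M (Ev D)"
    by (rule finite_measure_Union[OF Ev_sets[OF assms(2)] Ev_sets[OF assms(4)] d2])
  moreover have "Ev A \<union> Ev C = Ev B \<union> Ev D" unfolding u1 u2 assms(5) ..
  ultimately show ?thesis by metis
qed

lemma g_app: "i \<in> {1..n} \<Longrightarrow> g \<omega> i = X i \<omega>"
  by (simp add: g_def)

lemma cdf_eq: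
  assumes "U \<in> borel_measurable M" "V \<in> borel_measurable M"
    and "\<And>x. measure M {\<omega>\<in>space M. U \<omega> \<le> x} = measure M {\<omega>\<in>space M. V \<omega> \<le> x}"
  shows "eq_dist M U V"
  unfolding eq_dist_def
proof (rule cdf_unique)
  show "real_distribution (distr M borel U)" "real_distribution (distr M borel V)"
    using prob_space.real_distribution_distr[OF P] assms(1,2) by auto
  show "cdf (distr M borel U) = cdf (distr M borel V)"
  proof
    fix x
    have "cdf (distr M borel U) x = measure M {\<omega>\<in>space M. U \<omega> \<le> x}"
      proof -
      have "U -` {..x} \<inter> space M = {\<omega>\<in>space M. U \<omega> \<le> x}" by auto
      then show ?thesis unfolding cdf_def by (subst measure_distr[OF assms(1)]) simp_all
    qed
    moreover have "cdf (distr M borel V) x = measure M {\<omega>\<in>space M. V \<omega> \<le> x}"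
      proof -
      have "V -` {..x} \<inter> space M = {\<omega>\<in>space M. V \<omega> \<le> x}" by auto
      then show ?thesis unfolding cdf_def by (subst measure_distr[OF assms(2)]) simp_all
    qed
    ultimately show "cdf (distr M borel U) x = cdf (distr M borel V) x" using assms(3) by simp
  qed
qed

lemma part1_max:
  assumes n2: "n \<ge> 2"
  shows "eq_dist M (\<lambda>\<omega>. \<bar>- X 1 \<omega>\<bar>) (\<lambda>\<omega>. \<bar>max (- X 1 \<omega>) (X 2 \<omega>)\<bar>)"
proof (rule cdf_eq)
  have i1: "1 \<in> {1..n}" and i2: "2 \<in> {1..n}" using n2 by auto
  note [measurable] = Xm[OF i1] Xm[OF i2]
  show "(\<lambda>\<omega>. \<bar>- X 1 \<omega>\<bar>) \<in> borel_measurable M" by measurable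
  show "(\<lambda>\<omega>. \<bar>max (- X 1 \<omega>) (X 2 \<omega>)\<bar>) \<in> borel_measurable M" by measurable
  fix x :: real
  define A where "A = (\<lambda>f::nat\<Rightarrow>real. \<bar>max (- f 1) (f 2)\<bar> \<le> x)"
  define B where "B = (\<lambda>f::nat\<Rightarrow>real. \<bar>f 1\<bar> \<le> x)"
  define C where "C = (\<lambda>f::nat\<Rightarrow>real. \<bar>f 1\<bar> \<le> x \<and> f 2 > x)"
  define D where "D = (\<lambda>f::nat\<Rightarrow>real. f 1 > x \<and> \<bar>f 2\<bar> \<le> x)"
  have mA: "A \<in> measurable N (count_space UNIV)" unfolding A_def by measurable
  have mB: "B \<in> measurable N (count_space UNIV)" unfolding B_def by measurable
  have mC: "C \<in> measurable N (count_space UNIV)" unfolding C_def by measurable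
  have mD: "D \<in> measurable N (count_space UNIV)" unfolding D_def by measurable
  have k: "measure M (Ev A) + measure M (Ev C) = measure M (Ev B) + measure M (Ev D)"
    by (rule key[OF mA mB mC mD]) (auto simp: A_def B_def C_def D_def)
  have "measure M {\<omega>\<in>space M. D (\<lambda>i\<in>{1..n}. X (Transposition.transpose 1 2 i) \<omega>)} = measure M (Ev D)"
    by (rule swap[OF permutes_swap_id[OF i1 i2] mD])
  moreover have "{\<omega>\<in>space M. D (\<lambda>i\<in>{1..n}. X (Transposition.transpose 1 2 i) \<omega>)} = Ev C"
    using i1 i2 by (auto simp: Ev_def g_def C_def D_def)
  ultimately have "measure M (Ev C) = measure M (Ev D)" by simp
  with k have e1: "measure M (Ev A) = measure M (Ev B)" by simp
  have eA: "Ev A = {\<omega>\<in>space M. \<bar>max (- X 1 \<omega>) (X 2 \<omega>)\<bar> \<le> x}"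
    using i1 i2 by (auto simp: Ev_def g_def A_def)
  have eB: "Ev B = {\<omega>\<in>space M. \<bar>- X 1 \<omega>\<bar> \<le> x}"
    using i1 i2 by (auto simp: Ev_def g_def B_def)
  show "measure M {\<omega>\<in>space M. \<bar>- X 1 \<omega>\<bar> \<le> x} = measure M {\<omega>\<in>space M. \<bar>max (- X 1 \<omega>) (X 2 \<omega>)\<bar> \<le> x}"
    by (simp only: eA[symmetric] eB[symmetric] e1)
qed

lemma part1_min:
  assumes n2: "n \<ge> 2"
  shows "eq_dist M (\<lambda>\<omega>. \<bar>- X 1 \<omega>\<bar>) (\<lambda>\<omega>. \<bar>min (- X 1 \<omega>) (X 2 \<omega>)\<bar>)"
proof (rule cdf_eq)
  have i1: "1 \<in> {1..n}" and i2: "2 \<in> {1..n}" using n2 by auto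
  note [measurable] = Xm[OF i1] Xm[OF i2]
  show "(\<lambda>\<omega>. \<bar>- X 1 \<omega>\<bar>) \<in> borel_measurable M" by measurable
  show "(\<lambda>\<omega>. \<bar>min (- X 1 \<omega>) (X 2 \<omega>)\<bar>) \<in> borel_measurable M" by measurable
  fix x :: real
  define A where "A = (\<lambda>f::nat\<Rightarrow>real. \<bar>min (- f 1) (f 2)\<bar> \<le> x)"
  define B where "B = (\<lambda>f::nat\<Rightarrow>real. \<bar>f 1\<bar> \<le> x)"
  define C where "C = (\<lambda>f::nat\<Rightarrow>real. \<bar>f 1\<bar> \<le> x \<and> f 2 < -x)"
  define D where "D = (\<lambda>f::nat\<Rightarrow>real. f 1 < -x \<and> \<bar>f 2\<bar> \<le> x)"
  have mA: "A \<in> measurable N (count_space UNIV)" unfolding A_def by measurable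
  have mB: "B \<in> measurable N (count_space UNIV)" unfolding B_def by measurable
  have mC: "C \<in> measurable N (count_space UNIV)" unfolding C_def by measurable
  have mD: "D \<in> measurable N (count_space UNIV)" unfolding D_def by measurable
  have k: "measure M (Ev A) + measure M (Ev C) = measure M (Ev B) + measure M (Ev D)"
    by (rule key[OF mA mB mC mD]) (auto simp: A_def B_def C_def D_def)
  have "measure M {\<omega>\<in>space M. D (\<lambda>i\<in>{1..n}. X (Transposition.transpose 1 2 i) \<omega>)} = measure M (Ev D)"
    by (rule swap[OF permutes_swap_id[OF i1 i2] mD])
  moreover have "{\<omega>\<in>space M. D (\<lambda>i\<in>{1..n}. X (Transposition.transpose 1 2 i) \<omega>)} = Ev C"
    using i1 i2 by (auto simp: Ev_def g_def C_def D_def)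
  ultimately have "measure M (Ev C) = measure M (Ev D)" by simp
  with k have e1: "measure M (Ev A) = measure M (Ev B)" by simp
  have eA: "Ev A = {\<omega>\<in>space M. \<bar>min (- X 1 \<omega>) (X 2 \<omega>)\<bar> \<le> x}"
    using i1 i2 by (auto simp: Ev_def g_def A_def)
  have eB: "Ev B = {\<omega>\<in>space M. \<bar>- X 1 \<omega>\<bar> \<le> x}"
    using i1 i2 by (auto simp: Ev_def g_def B_def)
  show "measure M {\<omega>\<in>space M. \<bar>- X 1 \<omega>\<bar> \<le> x} = measure M {\<omega>\<in>space M. \<bar>min (- X 1 \<omega>) (X 2 \<omega>)\<bar> \<le> x}"
    by (simp only: eA[symmetric] eB[symmetric] e1)
qed

lemma maxset:
  assumes "1 \<le> k" "k \<le> n"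
  shows "{\<omega>\<in>space M. \<bar>max_upto (\<lambda>i \<omega>. if i = 1 then - X 1 \<omega> else X i \<omega>) k \<omega>\<bar> \<le> x}
    = Ev (\<lambda>f. (\<forall>i\<in>{1..k}. Yf f i \<le> x) \<and> (\<exists>i\<in>{1..k}. -x \<le> Yf f i))"
proof -
  have Yfg: "Yf (g \<omega>) i = (if i = 1 then - X 1 \<omega> else X i \<omega>)" if "i \<in> {1..k}" for i \<omega>
    using that assms by (auto simp: Yf_def g_def)
  have img: "(\<lambda>i. if i = 1 then - X 1 \<omega> else X i \<omega>) ` {1..k} = (\<lambda>i. Yf (g \<omega>) i) ` {1..k}" for \<omega>
    by (rule image_cong[OF refl], rule Yfg[symmetric])
  have fin: "finite ((\<lambda>i. Yf (g \<omega>) i) ` {1..k})"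
   and ne: "(\<lambda>i. Yf (g \<omega>) i) ` {1..k} \<noteq> {}" for \<omega>
    using assms by auto
  have pw: "(\<bar>max_upto (\<lambda>i \<omega>. if i = 1 then - X 1 \<omega> else X i \<omega>) k \<omega>\<bar> \<le> x) = ((\<forall>i\<in>{1..k}. Yf (g \<omega>) i \<le> x) \<and> (\<exists>i\<in>{1..k}. -x \<le> Yf (g \<omega>) i))" for \<omega>
    unfolding max_upto_def img abs_le_iff' Max_le_iff[OF fin ne] Max_ge_iff[OF fin ne] ball_img bex_img
    ..
  show ?thesis by (simp only: Ev_def pw)
qed

lemma minset:
  assumes "1 \<le> k" "k \<le> n"
  shows "{\<omega>\<in>space M. \<bar>min_upto (\<lambda>i \<omega>. if i = 1 then - X 1 \<omega> else X i \<omega>) k \<omega>\<bar> \<le> x}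
    = Ev (\<lambda>f. (\<forall>i\<in>{1..k}. -x \<le> Yf f i) \<and> (\<exists>i\<in>{1..k}. Yf f i \<le> x))"
proof -
  have Yfg: "Yf (g \<omega>) i = (if i = 1 then - X 1 \<omega> else X i \<omega>)" if "i \<in> {1..k}" for i \<omega>
    using that assms by (auto simp: Yf_def g_def)
  have img: "(\<lambda>i. if i = 1 then - X 1 \<omega> else X i \<omega>) ` {1..k} = (\<lambda>i. Yf (g \<omega>) i) ` {1..k}" for \<omega>
    by (rule image_cong[OF refl], rule Yfg[symmetric])
  have fin: "finite ((\<lambda>i. Yf (g \<omega>) i) ` {1..k})"
   and ne: "(\<lambda>i. Yf (g \<omega>) i) ` {1..k} \<noteq> {}" for \<omega>
    using assms by auto
  have pw: "(\<bar>min_upto (\<lambda>i \<omega>. if i = 1 then - X 1 \<omega> else X i \<omega>) k \<omega>\<bar> \<le> x) = ((\<forall>i\<in>{1..k}. -x \<le> Yf (g \<omega>) i) \<and> (\<exists>i\<in>{1..k}. Yf (g \<omega>) i \<le> x))" for \<omega>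
    unfolding min_upto_def img abs_le_iff' Min_le_iff[OF fin ne] Min_ge_iff[OF fin ne] ball_img bex_img
    by (rule conj_commute)
  show ?thesis by (simp only: Ev_def pw)
qed

lemma part2_max:
  assumes l: "l \<in> {3..n}"
  shows "measure M {\<omega>\<in>space M. \<bar>max_upto (\<lambda>i \<omega>. if i = 1 then - X 1 \<omega> else X i \<omega>) l \<omega>\<bar> \<le> x}
       \<le> measure M {\<omega>\<in>space M. \<bar>max_upto (\<lambda>i \<omega>. if i = 1 then - X 1 \<omega> else X i \<omega>) (l - 1) \<omega>\<bar> \<le> x}"
proof (cases "x < 0")
  case True
  then have "{\<omega>\<in>space M. \<bar>max_upto (\<lambda>i \<omega>. if i = 1 then - X 1 \<omega> else X i \<omega>) l \<omega>\<bar> \<le> x} = {}"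
    by auto
  then show ?thesis by (simp only:) (simp add: measure_nonneg)
next
  case False
  then have x0: "x \<ge> 0" by simp
  have i1: "1 \<in> {1..n}" and il: "l \<in> {1..n}" using l by auto
  have I: "{1..l} = insert l {1..<l}" "{1..l-1} = {1..<l}" "{1..<l} \<noteq> {}" using l by auto
  define A where "A = (\<lambda>f. (\<forall>i\<in>{1..l}. Yf f i \<le> x) \<and> (\<exists>i\<in>{1..l}. -x \<le> Yf f i))"
  define B where "B = (\<lambda>f. (\<forall>i\<in>{1..l-1}. Yf f i \<le> x) \<and> (\<exists>i\<in>{1..l-1}. -x \<le> Yf f i))"
  define C where "C = (\<lambda>f. (\<forall>i\<in>{1..<l}. Yf f i \<le> x) \<and> x < Yf f l)"
  define D where "D = (\<lambda>f. (\<forall>i\<in>{1..<l}. Yf f i < -x) \<and> -x \<le> Yf f l)"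
  have mA: "A \<in> measurable N (count_space UNIV)" unfolding A_def by measurable
  have mB: "B \<in> measurable N (count_space UNIV)" unfolding B_def by measurable
  have mC: "C \<in> measurable N (count_space UNIV)" unfolding C_def by measurable
  have mD: "D \<in> measurable N (count_space UNIV)" unfolding D_def by measurable
  have k: "measure M (Ev A) + measure M (Ev C) = measure M (Ev B) + measure M (Ev D)"
  proof (rule key[OF mA mB mC mD])
    fix f
    show "(A f \<or> C f) = (B f \<or> D f)"
      unfolding A_def B_def C_def D_def I(1,2) by (rule logic_max2[OF x0 I(3), where a="Yf f" and l=l])
    show "\<not> (A f \<and> C f)" unfolding A_def C_def I(1) by auto
    show "\<not> (B f \<and> D f)" unfolding B_def D_def I(2) using not_less by fastforce
  qed
  let ?\<pi> = "Transposition.transpose 1 l"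
  have sw: "measure M {\<omega>\<in>space M. D (\<lambda>i\<in>{1..n}. X (?\<pi> i) \<omega>)} = measure M (Ev D)"
    by (rule swap[OF permutes_swap_id[OF i1 il] mD])
  have sub: "{\<omega>\<in>space M. D (\<lambda>i\<in>{1..n}. X (?\<pi> i) \<omega>)} \<subseteq> Ev C"
  proof
    fix \<omega> assume "\<omega> \<in> {\<omega>\<in>space M. D (\<lambda>i\<in>{1..n}. X (?\<pi> i) \<omega>)}"
    then have sp: "\<omega> \<in> space M" and d: "D (\<lambda>i\<in>{1..n}. X (?\<pi> i) \<omega>)" by auto
    have d1: "\<forall>i\<in>{1..<l}. Yf (\<lambda>i\<in>{1..n}. X (?\<pi> i) \<omega>) i < -x" and d2: "-x \<le> Yf (\<lambda>i\<in>{1..n}. X (?\<pi> i) \<omega>) l"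
      using d unfolding D_def by auto
    have l1: "l \<noteq> 1" using l by auto
    have a1: "- X l \<omega> < -x" using d1[rule_format, of 1] l i1 by (simp add: Yf_def)
    have a2: "X i \<omega> < -x" if "i \<in> {1..<l}" "i \<noteq> 1" for i
      using d1[rule_format, OF that(1)] that l by (simp add: Yf_def transpose_apply_other)
    have a3: "-x \<le> X 1 \<omega>" using d2 l1 il by (simp add: Yf_def)
    have "C (g \<omega>)"
      unfolding C_def
    proof
      show "\<forall>i\<in>{1..<l}. Yf (g \<omega>) i \<le> x"
      proof
        fix i assume i: "i \<in> {1..<l}"
        show "Yf (g \<omega>) i \<le> x"
        proof (cases "i = 1")
          case True then show ?thesis using a3 i1 by (simp add: Yf_def g_def)
        next
          case False then show ?thesis using a2[OF i False] x0 i l by (simp add: Yf_def g_def)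
        qed
      qed
      show "x < Yf (g \<omega>) l" using a1 l1 il by (simp add: Yf_def g_def)
    qed
    then show "\<omega> \<in> Ev C" using sp unfolding Ev_def by simp
  qed
  interpret prob_space M by (rule P)
  have "measure M (Ev D) \<le> measure M (Ev C)"
    unfolding sw[symmetric] by (rule finite_measure_mono[OF sub Ev_sets[OF mC]])
  with k have fin: "measure M (Ev A) \<le> measure M (Ev B)" by linarith
  have eqA: "{\<omega>\<in>space M. \<bar>max_upto (\<lambda>i \<omega>. if i = 1 then - X 1 \<omega> else X i \<omega>) l \<omega>\<bar> \<le> x} = Ev A"
    unfolding A_def by (rule maxset) (use l in auto)
  have eqB: "{\<omega>\<in>space M. \<bar>max_upto (\<lambda>i \<omega>. if i = 1 then - X 1 \<omega> else X i \<omega>) (l-1) \<omega>\<bar> \<le> x} = Ev B"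
    unfolding B_def by (rule maxset) (use l in auto)
  show ?thesis unfolding eqA eqB by (rule fin)
qed

lemma part2_min:
  assumes l: "l \<in> {3..n}"
  shows "measure M {\<omega>\<in>space M. \<bar>min_upto (\<lambda>i \<omega>. if i = 1 then - X 1 \<omega> else X i \<omega>) l \<omega>\<bar> \<le> x}
       \<le> measure M {\<omega>\<in>space M. \<bar>min_upto (\<lambda>i \<omega>. if i = 1 then - X 1 \<omega> else X i \<omega>) (l - 1) \<omega>\<bar> \<le> x}"
proof (cases "x < 0")
  case True
  then have "{\<omega>\<in>space M. \<bar>min_upto (\<lambda>i \<omega>. if i = 1 then - X 1 \<omega> else X i \<omega>) l \<omega>\<bar> \<le> x} = {}"
    by auto
  then show ?thesis by (simp only:) (simp add: measure_nonneg)
next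
  case False
  then have x0: "x \<ge> 0" by simp
  have i1: "1 \<in> {1..n}" and il: "l \<in> {1..n}" using l by auto
  have I: "{1..l} = insert l {1..<l}" "{1..l-1} = {1..<l}" "{1..<l} \<noteq> {}" using l by auto
  define A where "A = (\<lambda>f. (\<forall>i\<in>{1..l}. -x \<le> Yf f i) \<and> (\<exists>i\<in>{1..l}. Yf f i \<le> x))"
  define B where "B = (\<lambda>f. (\<forall>i\<in>{1..l-1}. -x \<le> Yf f i) \<and> (\<exists>i\<in>{1..l-1}. Yf f i \<le> x))"
  define C where "C = (\<lambda>f. (\<forall>i\<in>{1..<l}. -x \<le> Yf f i) \<and> Yf f l < -x)"
  define D where "D = (\<lambda>f. (\<forall>i\<in>{1..<l}. x < Yf f i) \<and> Yf f l \<le> x)"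
  have mA: "A \<in> measurable N (count_space UNIV)" unfolding A_def by measurable
  have mB: "B \<in> measurable N (count_space UNIV)" unfolding B_def by measurable
  have mC: "C \<in> measurable N (count_space UNIV)" unfolding C_def by measurable
  have mD: "D \<in> measurable N (count_space UNIV)" unfolding D_def by measurable
  have k: "measure M (Ev A) + measure M (Ev C) = measure M (Ev B) + measure M (Ev D)"
  proof (rule key[OF mA mB mC mD])
    fix f
    show "(A f \<or> C f) = (B f \<or> D f)"
      unfolding A_def B_def C_def D_def I(1,2) by (rule logic_min2[OF x0 I(3), where a="Yf f" and l=l])
    show "\<not> (A f \<and> C f)" unfolding A_def C_def I(1) by auto
    show "\<not> (B f \<and> D f)" unfolding B_def D_def I(2) using not_less by fastforce
  qed
  let ?\<pi> = "Transposition.transpose 1 l"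
  have sw: "measure M {\<omega>\<in>space M. D (\<lambda>i\<in>{1..n}. X (?\<pi> i) \<omega>)} = measure M (Ev D)"
    by (rule swap[OF permutes_swap_id[OF i1 il] mD])
  have sub: "{\<omega>\<in>space M. D (\<lambda>i\<in>{1..n}. X (?\<pi> i) \<omega>)} \<subseteq> Ev C"
  proof
    fix \<omega> assume "\<omega> \<in> {\<omega>\<in>space M. D (\<lambda>i\<in>{1..n}. X (?\<pi> i) \<omega>)}"
    then have sp: "\<omega> \<in> space M" and d: "D (\<lambda>i\<in>{1..n}. X (?\<pi> i) \<omega>)" by auto
    have d1: "\<forall>i\<in>{1..<l}. x < Yf (\<lambda>i\<in>{1..n}. X (?\<pi> i) \<omega>) i" and d2: "Yf (\<lambda>i\<in>{1..n}. X (?\<pi> i) \<omega>) l \<le> x"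
      using d unfolding D_def by auto
    have l1: "l \<noteq> 1" using l by auto
    have a1: "x < - X l \<omega>" using d1[rule_format, of 1] l i1 by (simp add: Yf_def)
    have a2: "x < X i \<omega>" if "i \<in> {1..<l}" "i \<noteq> 1" for i
      using d1[rule_format, OF that(1)] that l by (simp add: Yf_def transpose_apply_other)
    have a3: "X 1 \<omega> \<le> x" using d2 l1 il by (simp add: Yf_def)
    have "C (g \<omega>)"
      unfolding C_def
    proof
      show "\<forall>i\<in>{1..<l}. -x \<le> Yf (g \<omega>) i"
      proof
        fix i assume i: "i \<in> {1..<l}"
        show "-x \<le> Yf (g \<omega>) i"
        proof (cases "i = 1")
          case True then show ?thesis using a3 i1 by (simp add: Yf_def g_def)
        next
          case False then show ?thesis using a2[OF i False] x0 i l by (simp add: Yf_def g_def)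
        qed
      qed
      show "Yf (g \<omega>) l < -x" using a1 l1 il by (simp add: Yf_def g_def)
    qed
    then show "\<omega> \<in> Ev C" using sp unfolding Ev_def by simp
  qed
  interpret prob_space M by (rule P)
  have "measure M (Ev D) \<le> measure M (Ev C)"
    unfolding sw[symmetric] by (rule finite_measure_mono[OF sub Ev_sets[OF mC]])
  with k have fin: "measure M (Ev A) \<le> measure M (Ev B)" by linarith
  have eqA: "{\<omega>\<in>space M. \<bar>min_upto (\<lambda>i \<omega>. if i = 1 then - X 1 \<omega> else X i \<omega>) l \<omega>\<bar> \<le> x} = Ev A"
    unfolding A_def by (rule minset) (use l in auto)
  have eqB: "{\<omega>\<in>space M. \<bar>min_upto (\<lambda>i \<omega>. if i = 1 then - X 1 \<omega> else X i \<omega>) (l-1) \<omega>\<bar> \<le> x} = Ev B"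
    unfolding B_def by (rule minset) (use l in auto)
  show ?thesis unfolding eqA eqB by (rule fin)
qed

end

theorem corollary3p11:
  fixes M :: "'a measure" and X :: "nat \<Rightarrow> 'a \<Rightarrow> real" and n :: nat
  assumes "prob_space M"
    and "n \<ge> 2"
    and "\<And>i. i \<in> {1..n} \<Longrightarrow> X i \<in> borel_measurable M"
    and "exchangeable M n X"
  shows "SIAMX M n (\<lambda>i \<omega>. if i = 1 then - X 1 \<omega> else X i \<omega>)
       \<and> SIAMN M n (\<lambda>i \<omega>. if i = 1 then - X 1 \<omega> else X i \<omega>)"
proof -
  interpret setting M X n by (rule setting.intro[OF assms(1) assms(3) assms(4)])
  have n2: "n \<ge> 2" by (rule assms(2))
  have e1: "eq_dist M (\<lambda>\<omega>. \<bar>if (1::nat) = 1 then - X 1 \<omega> else X 1 \<omega>\<bar>)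
     (\<lambda>\<omega>. \<bar>max (if (1::nat) = 1 then - X 1 \<omega> else X 1 \<omega>) (if (2::nat) = 1 then - X 1 \<omega> else X 2 \<omega>)\<bar>)"
    using part1_max[OF n2] by simp
  have e2: "eq_dist M (\<lambda>\<omega>. \<bar>if (1::nat) = 1 then - X 1 \<omega> else X 1 \<omega>\<bar>)
     (\<lambda>\<omega>. \<bar>min (if (1::nat) = 1 then - X 1 \<omega> else X 1 \<omega>) (if (2::nat) = 1 then - X 1 \<omega> else X 2 \<omega>)\<bar>)"
    using part1_min[OF n2] by simp
  show ?thesis
    unfolding SIAMX_def SIAMN_def st_le_def
    using e1 e2 part2_max part2_min by blast
qed

end
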